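(* Let $n,k\in\mathbb{N}$. A class of finite graphs all of which have $n$-depth tree-width at most $k$ is $\mathrm{MSO}_2$-orderable if, and only if, it is finite (up to isomorphism). Consequently, the class of all finite graphs of $n$-depth tree-width at most $k$ is hereditarily $\mathrm{MSO}_2$-unorderable.
   Context: Graphs are finite, simple, undirected. A graph has $n$-depth tree-width at most $k$ if it has a tree decomposition of width at most $k$ (all bags of size at most $k+1$) whose index tree is rooted and has height at most $n$. For $G=\langle V,E\rangle$, $\lceil G\rceil=\langle V\cup E,\mathrm{inc}\rangle$ (universe $V\cup E$, incidence relation). An MSO-formula $\varphi(x,y;Z_0,\dots,Z_{m-1})$ defines an order on a class $\mathcal{C}$ of structures if for every non-empty $\mathfrak{A}\in\mathcal{C}$ there are $P_0,\dots,P_{m-1}\subseteq A$ with $\{(a,b):\mathfrak{A}\models\varphi(a,b;\bar P)\}$ a linear order on $A$; a graph class is $\mathrm{MSO}_2$-orderable if some MSO-formula defines an order on $\{\lceil G\rceil\}$. A class is hereditarily $\mathrm{MSO}_2$-unorderable if it is infinite (up to isomorphism) and no infinite subclass is $\mathrm{MSO}_2$-orderable. *)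

theory Defs
  imports Main
begin

type_synonym 'v graph = "'v set \<times> 'v set set"

definition is_graph :: "'v graph \<Rightarrow> bool" where
  "is_graph G \<longleftrightarrow> finite (fst G) \<and>
     (\<forall>e\<in>snd G. \<exists>u v. u \<noteq> v \<and> e = {u, v} \<and> u \<in> fst G \<and> v \<in> fst G)"

definition graph_iso :: "'v graph \<Rightarrow> 'w graph \<Rightarrow> bool" where
  "graph_iso G H \<longleftrightarrow> (\<exists>f. bij_betw f (fst G) (fst H) \<and>
     (\<forall>u\<in>fst G. \<forall>v\<in>fst G. {u, v} \<in> snd G \<longleftrightarrow> {f u, f v} \<in> snd H))"

definition finite_upto_iso :: "'v graph set \<Rightarrow> bool" where
  "finite_upto_iso C \<longleftrightarrow> (\<exists>F :: 'v graph set. finite F \<and> (\<forall>G\<in>C. \<exists>H\<in>F. graph_iso G H))"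

text \<open>A rooted tree with node set T, root r and parent function par, of height at most n:
  every node reaches the root in at most n parent steps (height = number of edges of a
  longest root-leaf path).\<close>
definition rooted_tree_height :: "nat set \<Rightarrow> nat \<Rightarrow> (nat \<Rightarrow> nat) \<Rightarrow> nat \<Rightarrow> bool" where
  "rooted_tree_height T r par n \<longleftrightarrow> finite T \<and> r \<in> T \<and>
     (\<forall>t\<in>T - {r}. par t \<in> T) \<and>
     (\<forall>t\<in>T. \<exists>d\<le>n. (par ^^ d) t = r)"

definition tree_adj :: "nat \<Rightarrow> (nat \<Rightarrow> nat) \<Rightarrow> nat \<Rightarrow> nat \<Rightarrow> bool" where
  "tree_adj r par s t \<longleftrightarrow> (s \<noteq> r \<and> par s = t) \<or> (t \<noteq> r \<and> par t = s)"

definition tree_connected :: "nat \<Rightarrow> (nat \<Rightarrow> nat) \<Rightarrow> nat set \<Rightarrow> bool" where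
  "tree_connected r par S \<longleftrightarrow>
     (\<forall>s\<in>S. \<forall>t\<in>S. (s, t) \<in> {(a, b). a \<in> S \<and> b \<in> S \<and> tree_adj r par a b}\<^sup>*)"

definition tree_decomposition ::
  "'v graph \<Rightarrow> nat set \<Rightarrow> nat \<Rightarrow> (nat \<Rightarrow> nat) \<Rightarrow> (nat \<Rightarrow> 'v set) \<Rightarrow> bool" where
  "tree_decomposition G T r par bag \<longleftrightarrow>
     (\<forall>t\<in>T. bag t \<subseteq> fst G) \<and>
     (\<forall>v\<in>fst G. \<exists>t\<in>T. v \<in> bag t) \<and>
     (\<forall>e\<in>snd G. \<exists>t\<in>T. e \<subseteq> bag t) \<and>
     (\<forall>v\<in>fst G. tree_connected r par {t\<in>T. v \<in> bag t})"

definition depth_tw_le :: "nat \<Rightarrow> nat \<Rightarrow> 'v graph \<Rightarrow> bool" where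
  "depth_tw_le n k G \<longleftrightarrow> (\<exists>T r par bag. rooted_tree_height T r par n \<and>
     tree_decomposition G T r par bag \<and> (\<forall>t\<in>T. card (bag t) \<le> k + 1))"

datatype mso =
    Rel nat nat
  | Eq nat nat
  | Mem nat nat
  | Neg mso
  | Conj mso mso
  | Ex1 nat mso
  | Ex2 nat mso

fun free1 :: "mso \<Rightarrow> nat set" where
  "free1 (Rel i j) = {i, j}"
| "free1 (Eq i j) = {i, j}"
| "free1 (Mem i j) = {i}"
| "free1 (Neg \<phi>) = free1 \<phi>"
| "free1 (Conj \<phi> \<psi>) = free1 \<phi> \<union> free1 \<psi>"
| "free1 (Ex1 i \<phi>) = free1 \<phi> - {i}"
| "free1 (Ex2 i \<phi>) = free1 \<phi>"

fun sat :: "'a set \<Rightarrow> ('a \<Rightarrow> 'a \<Rightarrow> bool) \<Rightarrow> (nat \<Rightarrow> 'a) \<Rightarrow> (nat \<Rightarrow> 'a set) \<Rightarrow> mso \<Rightarrow> bool" where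
  "sat A R f F (Rel i j) = R (f i) (f j)"
| "sat A R f F (Eq i j) = (f i = f j)"
| "sat A R f F (Mem i j) = (f i \<in> F j)"
| "sat A R f F (Neg \<phi>) = (\<not> sat A R f F \<phi>)"
| "sat A R f F (Conj \<phi> \<psi>) = (sat A R f F \<phi> \<and> sat A R f F \<psi>)"
| "sat A R f F (Ex1 i \<phi>) = (\<exists>a\<in>A. sat A R (f(i := a)) F \<phi>)"
| "sat A R f F (Ex2 i \<phi>) = (\<exists>P. P \<subseteq> A \<and> sat A R f (F(i := P)) \<phi>)"

definition defines_order :: "mso \<Rightarrow> ('a set \<times> ('a \<Rightarrow> 'a \<Rightarrow> bool)) set \<Rightarrow> bool" where
  "defines_order \<phi> K \<longleftrightarrow> free1 \<phi> \<subseteq> {0, 1} \<and>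
     (\<forall>(A, R)\<in>K. A \<noteq> {} \<longrightarrow>
        (\<exists>P. (\<forall>i. P i \<subseteq> A) \<and>
           linear_order_on A {(a, b). a \<in> A \<and> b \<in> A \<and>
              sat A R (\<lambda>i. if i = 0 then a else b) P \<phi>}))"

definition inc_struct :: "'v graph \<Rightarrow> ('v + 'v set) set \<times> (('v + 'v set) \<Rightarrow> ('v + 'v set) \<Rightarrow> bool)" where
  "inc_struct G = (Inl ` fst G \<union> Inr ` snd G,
     (\<lambda>x y. \<exists>v e. x = Inl v \<and> y = Inr e \<and> v \<in> e))"

definition MSO2_orderable :: "'v graph set \<Rightarrow> bool" where
  "MSO2_orderable C \<longleftrightarrow> (\<exists>\<phi>. defines_order \<phi> (inc_struct ` C))"

definition hereditarily_MSO2_unorderable :: "'v graph set \<Rightarrow> bool" where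
  "hereditarily_MSO2_unorderable C \<longleftrightarrow> \<not> finite_upto_iso C \<and>
     (\<forall>C'\<subseteq>C. \<not> finite_upto_iso C' \<longrightarrow> \<not> MSO2_orderable C')"

end

theory Submission
  imports Defs "HOL-Library.Countable" "HOL-Library.FuncSet"
begin


fun free2 :: "mso \<Rightarrow> nat set" where
  "free2 (Rel i j) = {}"
| "free2 (Eq i j) = {}"
| "free2 (Mem i j) = {j}"
| "free2 (Neg \<phi>) = free2 \<phi>"
| "free2 (Conj \<phi> \<psi>) = free2 \<phi> \<union> free2 \<psi>"
| "free2 (Ex1 i \<phi>) = free2 \<phi>"
| "free2 (Ex2 i \<phi>) = free2 \<phi> - {i}"

lemma finite_free2: "finite (free2 \<phi>)"
  by (induction \<phi>) auto

lemma sat_cong2: "(\<forall>j\<in>free2 \<phi>. F j = F' j) \<Longrightarrow> sat A R f F \<phi> = sat A R f F' \<phi>"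
proof (induction \<phi> arbitrary: f F F')
  case (Ex2 i \<phi>)
  have "\<And>P. sat A R f (F(i := P)) \<phi> = sat A R f (F'(i := P)) \<phi>"
    using Ex2 by (intro Ex2.IH) auto
  then show ?case by simp
next
  case (Conj a b)
  have "sat A R f F a = sat A R f F' a" using Conj.prems by (intro Conj.IH) auto
  moreover have "sat A R f F b = sat A R f F' b" using Conj.prems by (intro Conj.IH) auto
  ultimately show ?case by simp
next
  case (Neg a) then show ?case by simp
next
  case (Ex1 i a)
  have "\<And>g. sat A R g F a = sat A R g F' a" using Ex1.prems by (intro Ex1.IH) simp
  then show ?case by simp
qed auto

lemma sat_aut:
  assumes bij: "bij_betw \<sigma> A A" and R: "\<forall>x\<in>A. \<forall>y\<in>A. R (\<sigma> x) (\<sigma> y) = R x y"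
  shows "(\<forall>i. f i \<in> A) \<Longrightarrow> (\<forall>j. F j \<subseteq> A) \<Longrightarrow>
     sat A R (\<sigma> \<circ> f) (\<lambda>j. \<sigma> ` F j) \<phi> = sat A R f F \<phi>"
proof (induction \<phi> arbitrary: f F)
  case (Rel i j) then show ?case using R by simp
next
  case (Eq i j) then show ?case using bij by (auto simp: bij_betw_def inj_on_def)
next
  case (Mem i j)
  have "inj_on \<sigma> A" using bij by (simp add: bij_betw_def)
  then show ?case using Mem by (simp add: inj_on_image_mem_iff)
next
  case (Ex1 i \<phi>)
  have "sat A R (\<sigma> \<circ> f) (\<lambda>j. \<sigma> ` F j) (Ex1 i \<phi>) = (\<exists>a\<in>A. sat A R ((\<sigma> \<circ> f)(i := \<sigma> a)) (\<lambda>j. \<sigma> ` F j) \<phi>)"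
  proof -
    have im: "\<sigma> ` A = A" using bij by (simp add: bij_betw_def)
    show ?thesis
    proof
      assume "sat A R (\<sigma> \<circ> f) (\<lambda>j. \<sigma> ` F j) (Ex1 i \<phi>)"
      then obtain a where a: "a \<in> A" "sat A R ((\<sigma> \<circ> f)(i := a)) (\<lambda>j. \<sigma> ` F j) \<phi>" by auto
      then obtain b where "b \<in> A" "a = \<sigma> b" using im by blast
      then show "\<exists>a\<in>A. sat A R ((\<sigma> \<circ> f)(i := \<sigma> a)) (\<lambda>j. \<sigma> ` F j) \<phi>" using a by blast
    next
      assume "\<exists>a\<in>A. sat A R ((\<sigma> \<circ> f)(i := \<sigma> a)) (\<lambda>j. \<sigma> ` F j) \<phi>"
      then show "sat A R (\<sigma> \<circ> f) (\<lambda>j. \<sigma> ` F j) (Ex1 i \<phi>)" using im by auto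
    qed
  qed
  also have "\<dots> = (\<exists>a\<in>A. sat A R (f(i := a)) F \<phi>)"
  proof (intro bex_cong refl)
    fix a assume a: "a \<in> A"
    have "(\<sigma> \<circ> f)(i := \<sigma> a) = \<sigma> \<circ> (f(i := a))" by auto
    then show "sat A R ((\<sigma> \<circ> f)(i := \<sigma> a)) (\<lambda>j. \<sigma> ` F j) \<phi> = sat A R (f(i := a)) F \<phi>"
    proof -
      have "sat A R (\<sigma> \<circ> (f(i := a))) (\<lambda>j. \<sigma> ` F j) \<phi> = sat A R (f(i := a)) F \<phi>"
        by (rule Ex1.IH) (use Ex1.prems a in auto)
      with \<open>(\<sigma> \<circ> f)(i := \<sigma> a) = \<sigma> \<circ> (f(i := a))\<close> show ?thesis by simp
    qed
  qed
  finally show ?case by (simp only: sat.simps)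
next
  case (Ex2 i \<phi>)
  have inj: "inj_on \<sigma> A" and im: "\<sigma> ` A = A" using bij by (auto simp: bij_betw_def)
  have "sat A R (\<sigma> \<circ> f) (\<lambda>j. \<sigma> ` F j) (Ex2 i \<phi>) = (\<exists>P. P \<subseteq> A \<and> sat A R (\<sigma> \<circ> f) ((\<lambda>j. \<sigma> ` F j)(i := \<sigma> ` P)) \<phi>)"
  proof
    assume "sat A R (\<sigma> \<circ> f) (\<lambda>j. \<sigma> ` F j) (Ex2 i \<phi>)"
    then obtain Q where Q: "Q \<subseteq> A" "sat A R (\<sigma> \<circ> f) ((\<lambda>j. \<sigma> ` F j)(i := Q)) \<phi>" by auto
    let ?P = "inv_into A \<sigma> ` Q"
    have "\<sigma> ` ?P = Q" using Q(1) im by (simp add: image_inv_into_cancel)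
    moreover have "?P \<subseteq> A" using Q(1) im by (metis image_subsetI inv_into_into subset_iff)
    ultimately show "\<exists>P. P \<subseteq> A \<and> sat A R (\<sigma> \<circ> f) ((\<lambda>j. \<sigma> ` F j)(i := \<sigma> ` P)) \<phi>"
      using Q by metis
  next
    assume "\<exists>P. P \<subseteq> A \<and> sat A R (\<sigma> \<circ> f) ((\<lambda>j. \<sigma> ` F j)(i := \<sigma> ` P)) \<phi>"
    then obtain P where "P \<subseteq> A" "sat A R (\<sigma> \<circ> f) ((\<lambda>j. \<sigma> ` F j)(i := \<sigma> ` P)) \<phi>" by auto
    moreover have "\<sigma> ` P \<subseteq> A" using \<open>P \<subseteq> A\<close> im by auto
    ultimately show "sat A R (\<sigma> \<circ> f) (\<lambda>j. \<sigma> ` F j) (Ex2 i \<phi>)" by (simp only: sat.simps) blast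
  qed
  also have "\<dots> = (\<exists>P. P \<subseteq> A \<and> sat A R f (F(i := P)) \<phi>)"
  proof (intro ex_cong1 conj_cong refl)
    fix P assume "P \<subseteq> A"
    have "(\<lambda>j. \<sigma> ` F j)(i := \<sigma> ` P) = (\<lambda>j. \<sigma> ` (F(i := P)) j)" by (rule ext) simp
    then show "sat A R (\<sigma> \<circ> f) ((\<lambda>j. \<sigma> ` F j)(i := \<sigma> ` P)) \<phi> = sat A R f (F(i := P)) \<phi>"
    proof -
      have "sat A R (\<sigma> \<circ> f) (\<lambda>j. \<sigma> ` (F(i := P)) j) \<phi> = sat A R f (F(i := P)) \<phi>"
        by (rule Ex2.IH) (use Ex2.prems \<open>P \<subseteq> A\<close> in auto)
      with \<open>(\<lambda>j. \<sigma> ` F j)(i := \<sigma> ` P) = (\<lambda>j. \<sigma> ` (F(i := P)) j)\<close> show ?thesis by simp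
    qed
  qed
  finally show ?case by (simp only: sat.simps)
qed auto

lemma linorder_aut_id:
  assumes fin: "finite A" and lin: "linear_order_on A L" and bij: "bij_betw \<sigma> A A"
    and inv: "\<forall>a\<in>A. \<forall>b\<in>A. (\<sigma> a, \<sigma> b) \<in> L \<longleftrightarrow> (a, b) \<in> L"
    and a: "a \<in> A"
  shows "\<sigma> a = a"
proof -
  define D where "D x = {y\<in>A. (y, x) \<in> L}" for x
  have cardD: "card (D (\<sigma> x)) = card (D x)" if "x \<in> A" for x
  proof -
    have "\<sigma> ` D x = D (\<sigma> x)"
    proof
      show "\<sigma> ` D x \<subseteq> D (\<sigma> x)" using bij inv that by (auto simp: D_def bij_betw_def)
      show "D (\<sigma> x) \<subseteq> \<sigma> ` D x"
      proof
        fix y assume "y \<in> D (\<sigma> x)"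
        then have y: "y \<in> A" "(y, \<sigma> x) \<in> L" by (auto simp: D_def)
        obtain z where z: "z \<in> A" "y = \<sigma> z" using bij y(1) by (auto simp: bij_betw_def)
        then have "(z, x) \<in> L" using inv y that by auto
        then show "y \<in> \<sigma> ` D x" using z by (auto simp: D_def)
      qed
    qed
    moreover have "inj_on \<sigma> (D x)" using bij by (auto simp: bij_betw_def D_def inj_on_def)
    ultimately show ?thesis by (metis card_image)
  qed
  have lt: "card (D x) < card (D y)" if "x \<in> A" "y \<in> A" "(x, y) \<in> L" "x \<noteq> y" for x y
  proof (rule psubset_card_mono)
    show "finite (D y)" using fin by (auto simp: D_def)
    have tr: "trans L" and as: "antisym L" and rf: "refl_on A L"
      using lin by (auto simp: linear_order_on_def partial_order_on_def preorder_on_def)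
    have "D x \<subseteq> D y" using tr that by (auto simp: D_def trans_def)
    moreover have "y \<in> D y" using rf that by (auto simp: D_def refl_on_def)
    moreover have "y \<notin> D x" using as that by (auto simp: D_def antisym_def)
    ultimately show "D x \<subset> D y" by blast
  qed
  have tot: "total_on A L" using lin by (simp add: linear_order_on_def)
  have sa: "\<sigma> a \<in> A" using bij a by (auto simp: bij_betw_def)
  show ?thesis
  proof (rule ccontr)
    assume ne: "\<sigma> a \<noteq> a"
    then have "(a, \<sigma> a) \<in> L \<or> (\<sigma> a, a) \<in> L" using tot a sa by (auto simp: total_on_def)
    then show False using lt[OF a sa] lt[OF sa a] ne cardD[OF a] by auto
  qed
qed



definition wc :: "'v set set \<Rightarrow> ('v + 'v set \<Rightarrow> nat) \<Rightarrow> 'v \<Rightarrow> 'v \<Rightarrow> nat option" where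
  "wc E col u v = (if {u, v} \<in> E then Some (col (Inr {u, v})) else None)"

definition vc :: "'v set set \<Rightarrow> ('v + 'v set \<Rightarrow> nat) \<Rightarrow> 'v list \<Rightarrow> 'v \<Rightarrow> nat" where
  "vc E col bs u = to_nat (col (Inl u), map (wc E col u) bs)"

definition pcol :: "'v set set \<Rightarrow> ('v + 'v set \<Rightarrow> nat) \<Rightarrow> 'v list \<Rightarrow> 'v + 'v set \<Rightarrow> nat" where
  "pcol E col bs x = (case x of Inl u \<Rightarrow> vc E col bs u | Inr e \<Rightarrow> to_nat (col (Inr e), [] :: nat option list))"

definition aut :: "'v set \<Rightarrow> 'v set set \<Rightarrow> ('v + 'v set \<Rightarrow> nat) \<Rightarrow> ('v \<Rightarrow> 'v) \<Rightarrow> bool" where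
  "aut V E col f \<longleftrightarrow> bij_betw f V V \<and> (\<forall>v\<in>V. col (Inl (f v)) = col (Inl v)) \<and>
     (\<forall>u\<in>V. \<forall>v\<in>V. wc E col (f u) (f v) = wc E col u v)"

definition rigid :: "'v set \<Rightarrow> 'v set set \<Rightarrow> ('v + 'v set \<Rightarrow> nat) \<Rightarrow> bool" where
  "rigid V E col \<longleftrightarrow> (\<forall>f. aut V E col f \<longrightarrow> (\<forall>v\<in>V. f v = v))"

definition isoB :: "'v set set \<Rightarrow> ('v + 'v set \<Rightarrow> nat) \<Rightarrow> 'v list \<Rightarrow> 'v set \<Rightarrow> 'v set \<Rightarrow> ('v \<Rightarrow> 'v) \<Rightarrow> bool" where
  "isoB E col bs p q g \<longleftrightarrow> bij_betw g p q \<and> (\<forall>u\<in>p. vc E col bs (g u) = vc E col bs u) \<and>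
     (\<forall>u\<in>p. \<forall>v\<in>p. wc E col (g u) (g v) = wc E col u v)"

fun dec :: "nat \<Rightarrow> nat \<Rightarrow> 'v set \<Rightarrow> 'v set set \<Rightarrow> bool" where
  "dec 0 k V E = (card V \<le> k + 1)"
| "dec (Suc h) k V E = (\<exists>B P. B \<subseteq> V \<and> card B \<le> k + 1 \<and> \<Union>P = V - B \<and> (\<forall>p\<in>P. p \<noteq> {}) \<and>
     (\<forall>p\<in>P. \<forall>q\<in>P. p \<noteq> q \<longrightarrow> p \<inter> q = {}) \<and> (\<forall>e\<in>E. e \<subseteq> B \<or> (\<exists>p\<in>P. e \<subseteq> B \<union> p)) \<and>
     (\<forall>p\<in>P. dec h k p {e\<in>E. e \<subseteq> p}))"

lemma wc_sym: "wc E col u v = wc E col v u"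
  by (simp add: wc_def insert_commute)

lemma vc_wc: "vc E col bs x = vc E col bs y \<Longrightarrow> b \<in> set bs \<Longrightarrow> wc E col x b = wc E col y b"
  by (auto simp: vc_def)

lemma vc_col: "vc E col bs x = vc E col bs y \<Longrightarrow> col (Inl x) = col (Inl y)"
  by (auto simp: vc_def)

lemma isoB_cong: "isoB E col bs p q g \<Longrightarrow> (\<forall>x\<in>p. g x = g' x) \<Longrightarrow> isoB E col bs p q g'"
  unfolding isoB_def by (auto cong: bij_betw_cong)

lemma isoB_id: "isoB E col bs p p (\<lambda>x. x)"
  by (simp add: isoB_def bij_betw_def)

lemma isoB_inv: assumes "isoB E col bs p q g" shows "isoB E col bs q p (inv_into p g)"
proof -
  have b: "bij_betw g p q" using assms by (simp add: isoB_def)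
  have bi: "bij_betw (inv_into p g) q p" using b by (rule bij_betw_inv_into)
  have ginv: "g (inv_into p g x) = x" if "x \<in> q" for x
    using b that by (simp add: bij_betw_def f_inv_into_f)
  have inp: "inv_into p g x \<in> p" if "x \<in> q" for x using bi that by (auto simp: bij_betw_def)
  have "vc E col bs (inv_into p g u) = vc E col bs u" if "u \<in> q" for u
    using assms inp[OF that] ginv[OF that] unfolding isoB_def by metis
  moreover have "wc E col (inv_into p g u) (inv_into p g v) = wc E col u v" if "u \<in> q" "v \<in> q" for u v
    using assms inp[OF that(1)] inp[OF that(2)] ginv[OF that(1)] ginv[OF that(2)] unfolding isoB_def by metis
  ultimately show ?thesis using bi by (simp add: isoB_def)
qed

lemma aut_part_isoB:
  assumes "aut p {e\<in>E. e \<subseteq> p} (pcol E col bs) g"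
  shows "isoB E col bs p p g"
proof -
  have b: "bij_betw g p p" using assms by (simp add: aut_def)
  have gp: "g u \<in> p" if "u \<in> p" for u using b that by (auto simp: bij_betw_def)
  have "vc E col bs (g u) = vc E col bs u" if "u \<in> p" for u
    using assms that by (simp add: aut_def pcol_def)
  moreover have "wc E col (g u) (g v) = wc E col u v" if "u \<in> p" "v \<in> p" for u v
  proof -
    have key: "wc {e\<in>E. e \<subseteq> p} (pcol E col bs) x y = map_option (\<lambda>c. to_nat (c, [] :: nat option list)) (wc E col x y)"
      if "x \<in> p" "y \<in> p" for x y using that by (simp add: wc_def pcol_def)
    have "wc {e\<in>E. e \<subseteq> p} (pcol E col bs) (g u) (g v) = wc {e\<in>E. e \<subseteq> p} (pcol E col bs) u v"
      using assms that by (simp add: aut_def)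
    then have "map_option (\<lambda>c. to_nat (c, [] :: nat option list)) (wc E col (g u) (g v)) =
               map_option (\<lambda>c. to_nat (c, [] :: nat option list)) (wc E col u v)"
      using key that gp by simp
    moreover have "inj (map_option (\<lambda>c. to_nat (c, [] :: nat option list)))"
      by (rule option.inj_map) (auto simp: inj_def)
    ultimately show ?thesis by (auto dest: injD)
  qed
  ultimately show ?thesis using b by (simp add: isoB_def)
qed

locale splitting =
  fixes V :: "'v set" and E :: "'v set set" and col :: "'v + 'v set \<Rightarrow> nat"
    and B :: "'v set" and P :: "'v set set" and bs :: "'v list"
  assumes BV: "B \<subseteq> V" and UP: "\<Union>P = V - B"
    and disj: "\<forall>p\<in>P. \<forall>q\<in>P. p \<noteq> q \<longrightarrow> p \<inter> q = {}"
    and nonempty: "\<forall>p\<in>P. p \<noteq> {}"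
    and edges: "\<forall>e\<in>E. e \<subseteq> B \<or> (\<exists>p\<in>P. e \<subseteq> B \<union> p)"
    and bs: "set bs = B"
begin

lemma part_sub: "p \<in> P \<Longrightarrow> p \<subseteq> V - B"
  using UP by blast

lemma noedge:
  assumes "p \<in> P" "q \<in> P" "p \<noteq> q" "u \<in> p" "v \<in> q"
  shows "wc E col u v = None"
proof (rule ccontr)
  assume "wc E col u v \<noteq> None"
  then have e: "{u, v} \<in> E" by (auto simp: wc_def split: if_splits)
  have "u \<notin> B" "v \<notin> B" using part_sub assms by auto
  then obtain r where r: "r \<in> P" "{u, v} \<subseteq> B \<union> r" using edges e by blast
  then have "u \<in> r" "v \<in> r" using \<open>u \<notin> B\<close> \<open>v \<notin> B\<close> by auto
  then have "r = p" "r = q" using disj assms r(1) by blast+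
  then show False using assms by simp
qed

lemma glue:
  assumes bij: "bij_betw \<rho> V V" and fixB: "\<forall>b\<in>B. \<rho> b = b"
    and iso: "\<forall>p\<in>P. \<exists>q\<in>P. isoB E col bs p q \<rho>"
  shows "aut V E col \<rho>"
proof -
  have cases: "x \<in> B \<or> (\<exists>p\<in>P. x \<in> p)" if "x \<in> V" for x using UP that by blast
  have vcol: "col (Inl (\<rho> v)) = col (Inl v)" if vV: "v \<in> V" for v
  proof (cases "v \<in> B")
    case True then show ?thesis using fixB by simp
  next
    case False
    then obtain p where "p \<in> P" "v \<in> p" using cases vV by blast
    then obtain q where "isoB E col bs p q \<rho>" using iso by blast
    then have "vc E col bs (\<rho> v) = vc E col bs v" using \<open>v \<in> p\<close> by (simp add: isoB_def)
    then show ?thesis by (rule vc_col)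
  qed
  have half: "wc E col (\<rho> u) (\<rho> v) = wc E col u v" if hu: "u \<in> p" and hp: "p \<in> P" and hv: "v \<in> B" for u v p
  proof -
    obtain q where "isoB E col bs p q \<rho>" using iso hp by blast
    then have "vc E col bs (\<rho> u) = vc E col bs u" using that by (simp add: isoB_def)
    then have "wc E col (\<rho> u) v = wc E col u v" by (rule vc_wc) (use bs hv in simp)
    then show ?thesis using fixB hv by simp
  qed
  have wcp: "wc E col (\<rho> u) (\<rho> v) = wc E col u v" if uV: "u \<in> V" and vV: "v \<in> V" for u v
  proof (cases "u \<in> B")
    case uB: True
    show ?thesis
    proof (cases "v \<in> B")
      case True then show ?thesis using uB fixB by simp
    next
      case False
      then obtain p where "p \<in> P" "v \<in> p" using cases vV by blast
      then have h: "wc E col (\<rho> v) (\<rho> u) = wc E col v u" using half[of v p u] uB by blast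
      have "wc E col (\<rho> u) (\<rho> v) = wc E col (\<rho> v) (\<rho> u)" by (rule wc_sym)
      also have "\<dots> = wc E col v u" by (rule h)
      also have "\<dots> = wc E col u v" by (rule wc_sym)
      finally show ?thesis .
    qed
  next
    case uB: False
    then obtain p where p: "p \<in> P" "u \<in> p" using cases uV by blast
    show ?thesis
    proof (cases "v \<in> B")
      case True show ?thesis using half[OF p(2) p(1) True] .
    next
      case False
      then obtain p' where p': "p' \<in> P" "v \<in> p'" using cases vV by blast
      obtain q where q: "q \<in> P" "isoB E col bs p q \<rho>" using iso p by blast
      obtain q' where q': "q' \<in> P" "isoB E col bs p' q' \<rho>" using iso p' by blast
      show ?thesis
      proof (cases "p = p'")
        case True then show ?thesis using q(2) p(2) p'(2) unfolding isoB_def by blast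
      next
        case ne: False
        have "q \<noteq> q'"
        proof
          assume "q = q'"
          have "\<rho> v \<in> q" using q' p' \<open>q = q'\<close> by (auto simp: isoB_def bij_betw_def)
          then obtain u' where u': "u' \<in> p" "\<rho> u' = \<rho> v" using q by (auto simp: isoB_def bij_betw_def)
          have "u' \<in> V" "v \<in> V" using u' p part_sub vV by auto
          then have "u' = v" using bij u' by (auto simp: bij_betw_def inj_on_def)
          then show False using u' p' p ne disj by blast
        qed
        moreover have "\<rho> u \<in> q" "\<rho> v \<in> q'" using q q' p p' by (auto simp: isoB_def bij_betw_def)
        ultimately show ?thesis using noedge[OF q(1) q'(1) \<open>q \<noteq> q'\<close>] noedge[OF p(1) p'(1) ne p(2) p'(2)] by simp
      qed
    qed
  qed
  show ?thesis using bij vcol wcp by (simp add: aut_def)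
qed

end



lemma bij_ext_id:
  assumes "bij_betw g p p" "p \<subseteq> V"
  shows "bij_betw (\<lambda>x. if x \<in> p then g x else x) V V"
proof -
  have "bij_betw (\<lambda>x. if x \<in> p then g x else x) (p \<union> (V - p)) (p \<union> (V - p))"
    by (rule bij_betw_disjoint_Un[OF assms(1)]) (auto simp: bij_betw_def)
  moreover have "p \<union> (V - p) = V" using assms(2) by blast
  ultimately show ?thesis by simp
qed

lemma bij_swap:
  assumes "bij_betw g p q" "p \<subseteq> V" "q \<subseteq> V" "p \<inter> q = {}"
  shows "bij_betw (\<lambda>x. if x \<in> p then g x else if x \<in> q then inv_into p g x else x) V V"
proof -
  have inner: "bij_betw (\<lambda>x. if x \<in> q then inv_into p g x else x) (q \<union> (V - p - q)) (p \<union> (V - p - q))"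
    by (rule bij_betw_disjoint_Un[OF bij_betw_inv_into[OF assms(1)]]) (auto simp: bij_betw_def)
  have "bij_betw (\<lambda>x. if x \<in> p then g x else (\<lambda>x. if x \<in> q then inv_into p g x else x) x)
      (p \<union> (q \<union> (V - p - q))) (q \<union> (p \<union> (V - p - q)))"
    by (rule bij_betw_disjoint_Un[OF assms(1) inner]) (use assms(4) in auto)
  moreover have "p \<union> (q \<union> (V - p - q)) = V" "q \<union> (p \<union> (V - p - q)) = V" using assms by auto
  ultimately show ?thesis by simp
qed

lemma rigid_bound:
  fixes K :: "nat set"
  assumes "finite K"
  shows "\<exists>N. \<forall>(V::'v set) E col. is_graph (V, E) \<and> dec h k V E \<and> (\<forall>v\<in>V. col (Inl v) \<in> K) \<and>
            (\<forall>e\<in>E. col (Inr e) \<in> K) \<and> rigid V E col \<longrightarrow> card V \<le> N"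
  using assms
proof (induction h arbitrary: K)
  case 0 show ?case by (intro exI[of _ "k+1"]) auto
next
  case (Suc h)
  define W where "W = insert None (Some ` K)"
  define K' where "K' = to_nat ` (K \<times> {xs :: nat option list. set xs \<subseteq> W \<and> length xs \<le> k+1})"
  have finW: "finite W" using Suc.prems by (simp add: W_def)
  have finK': "finite K'" using Suc.prems finW by (auto simp: K'_def intro!: finite_lists_length_le)
  obtain N0 where N0: "\<forall>(V::'v set) E col. is_graph (V, E) \<and> dec h k V E \<and> (\<forall>v\<in>V. col (Inl v) \<in> K') \<and>
            (\<forall>e\<in>E. col (Inr e) \<in> K') \<and> rigid V E col \<longrightarrow> card V \<le> N0"
    using Suc.IH[OF finK'] by blast
  define CS where "CS = (\<Union>m\<in>{..N0}. {m} \<times> (({0..<m} \<rightarrow>\<^sub>E K') \<times> (({0..<m} \<times> {0..<m}) \<rightarrow>\<^sub>E W)))"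
  have finCS: "finite CS" unfolding CS_def using finK' finW
    by (intro finite_UN_I finite_cartesian_product finite_PiE) auto
  show ?case
  proof (intro exI[of _ "k + 1 + card CS * N0"] allI impI)
    fix V :: "'v set" and E col
    assume H: "is_graph (V, E) \<and> dec (Suc h) k V E \<and> (\<forall>v\<in>V. col (Inl v) \<in> K) \<and>
            (\<forall>e\<in>E. col (Inr e) \<in> K) \<and> rigid V E col"
    then obtain B P where BV: "B \<subseteq> V" and cB: "card B \<le> k + 1" and UP: "\<Union>P = V - B"
      and ne: "\<forall>p\<in>P. p \<noteq> {}" and disj: "\<forall>p\<in>P. \<forall>q\<in>P. p \<noteq> q \<longrightarrow> p \<inter> q = {}"
      and edges: "\<forall>e\<in>E. e \<subseteq> B \<or> (\<exists>p\<in>P. e \<subseteq> B \<union> p)"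
      and decp: "\<forall>p\<in>P. dec h k p {e\<in>E. e \<subseteq> p}"
      by auto
    have finV: "finite V" using H by (simp add: is_graph_def)
    have gr: "\<forall>e\<in>E. \<exists>u v. u \<noteq> v \<and> e = {u, v} \<and> u \<in> V \<and> v \<in> V" using H by (simp add: is_graph_def)
    have colV: "\<forall>v\<in>V. col (Inl v) \<in> K" and colE: "\<forall>e\<in>E. col (Inr e) \<in> K" using H by auto
    have rig: "rigid V E col" using H by simp
    obtain bs where bs: "set bs = B" "distinct bs"
      using finite_distinct_list finite_subset[OF BV finV] by blast
    have lbs: "length bs \<le> k + 1" using bs cB distinct_card by fastforce
    interpret S: splitting V E col B P bs
      using BV UP disj ne edges bs by unfold_locales auto
    have finP: "finite P" using finV UP by (rule_tac finite_subset[of P "Pow V"]) auto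
    have vcK: "vc E col bs u \<in> K'" if "u \<in> V" for u
    proof -
      have "set (map (wc E col u) bs) \<subseteq> W"
        using colE by (auto simp: wc_def W_def)
      then show ?thesis using colV that lbs by (auto simp: vc_def K'_def)
    qed
    have wcW: "wc E col u v \<in> W" for u v using colE by (auto simp: wc_def W_def)
    have partbound: "card p \<le> N0" if pP: "p \<in> P" for p
    proof -
      have sub: "p \<subseteq> V - B" using S.part_sub pP .
      have g1: "is_graph (p, {e\<in>E. e \<subseteq> p})"
        unfolding is_graph_def
      proof (intro conjI ballI)
        show "finite (fst (p, {e\<in>E. e \<subseteq> p}))" using finite_subset[OF sub] finV by simp
      next
        fix e assume "e \<in> snd (p, {e\<in>E. e \<subseteq> p})"
        then have e: "e \<in> E" "e \<subseteq> p" by auto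
        then obtain u v where "u \<noteq> v" "e = {u, v}" using gr by blast
        then show "\<exists>u v. u \<noteq> v \<and> e = {u, v} \<and> u \<in> fst (p, {e\<in>E. e \<subseteq> p}) \<and> v \<in> fst (p, {e\<in>E. e \<subseteq> p})"
          using e by auto
      qed
      have c1: "\<forall>v\<in>p. pcol E col bs (Inl v) \<in> K'" using vcK sub by (auto simp: pcol_def)
      have c2: "\<forall>e\<in>{e\<in>E. e \<subseteq> p}. pcol E col bs (Inr e) \<in> K'"
        using colE by (auto simp: pcol_def K'_def)
      have r1: "rigid p {e\<in>E. e \<subseteq> p} (pcol E col bs)"
        unfolding rigid_def
      proof (intro allI impI)
        fix g assume a: "aut p {e\<in>E. e \<subseteq> p} (pcol E col bs) g"
        have iso: "isoB E col bs p p g" using a by (rule aut_part_isoB)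
        define \<rho> where "\<rho> x = (if x \<in> p then g x else x)" for x
        have bij: "bij_betw \<rho> V V" unfolding \<rho>_def
          by (rule bij_ext_id) (use iso sub in \<open>auto simp: isoB_def\<close>)
        have fixB: "\<forall>b\<in>B. \<rho> b = b" using sub by (auto simp: \<rho>_def)
        have isos: "\<forall>r\<in>P. \<exists>q\<in>P. isoB E col bs r q \<rho>"
        proof
          fix r assume rP: "r \<in> P"
          show "\<exists>q\<in>P. isoB E col bs r q \<rho>"
          proof (cases "r = p")
            case True
            have "isoB E col bs p p \<rho>" by (rule isoB_cong[OF iso]) (simp add: \<rho>_def)
            then show ?thesis using True rP by blast
          next
            case False
            then have "r \<inter> p = {}" using disj rP pP by blast
            then have "isoB E col bs r r \<rho>" by (intro isoB_cong[OF isoB_id]) (auto simp: \<rho>_def)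
            then show ?thesis using rP by blast
          qed
        qed
        have "aut V E col \<rho>" using S.glue[OF bij fixB isos] .
        then have "\<forall>v\<in>V. \<rho> v = v" using rig by (simp add: rigid_def)
        then show "\<forall>v\<in>p. g v = v" using sub by (force simp: \<rho>_def)
      qed
      show ?thesis using N0 g1 decp pP c1 c2 r1 by blast
    qed
    define beta where "beta p = (SOME \<beta>. bij_betw \<beta> p {0..<card p})" for p :: "'v set"
    have beta: "bij_betw (beta p) p {0..<card p}" if "p \<in> P" for p
    proof -
      have "finite p" using S.part_sub[OF that] finV by (auto intro: finite_subset)
      then show ?thesis unfolding beta_def by (rule someI_ex[OF ex_bij_betw_finite_nat])
    qed
    have inv_in: "inv_into p (beta p) i \<in> p" if "p \<in> P" "i < card p" for p i
      using bij_betw_inv_into[OF beta[OF that(1)]] that(2) by (auto simp: bij_betw_def)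
    define canon where "canon p = (card p,
        restrict (\<lambda>i. vc E col bs (inv_into p (beta p) i)) {0..<card p},
        restrict (\<lambda>(i, j). wc E col (inv_into p (beta p) i) (inv_into p (beta p) j)) ({0..<card p} \<times> {0..<card p}))"
      for p
    have canonCS: "canon p \<in> CS" if pP: "p \<in> P" for p
    proof -
      have "card p \<in> {..N0}" using partbound[OF pP] by simp
      moreover have "restrict (\<lambda>i. vc E col bs (inv_into p (beta p) i)) {0..<card p} \<in> {0..<card p} \<rightarrow>\<^sub>E K'"
        using vcK inv_in[OF pP] S.part_sub[OF pP] by (force intro!: vcK)
      moreover have "restrict (\<lambda>(i, j). wc E col (inv_into p (beta p) i) (inv_into p (beta p) j)) ({0..<card p} \<times> {0..<card p})
          \<in> ({0..<card p} \<times> {0..<card p}) \<rightarrow>\<^sub>E W"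
        using wcW by auto
      ultimately show ?thesis unfolding CS_def canon_def by blast
    qed
    have canon_inj: "inj_on canon P"
    proof (rule inj_onI)
      fix p q assume pP: "p \<in> P" and qP: "q \<in> P" and eq: "canon p = canon q"
      show "p = q"
      proof (rule ccontr)
        assume pq: "p \<noteq> q"
        define m where "m = card p"
        have mq: "card q = m" using eq by (simp add: canon_def m_def)
        have vceq: "vc E col bs (inv_into p (beta p) i) = vc E col bs (inv_into q (beta q) i)" if "i < m" for i
        proof -
          have "restrict (\<lambda>i. vc E col bs (inv_into p (beta p) i)) {0..<m} i =
                restrict (\<lambda>i. vc E col bs (inv_into q (beta q) i)) {0..<m} i"
            using eq mq by (simp add: canon_def m_def)
          then show ?thesis using that by simp
        qed
        have wceq: "wc E col (inv_into p (beta p) i) (inv_into p (beta p) j) =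
                    wc E col (inv_into q (beta q) i) (inv_into q (beta q) j)" if "i < m" "j < m" for i j
        proof -
          have "restrict (\<lambda>(i, j). wc E col (inv_into p (beta p) i) (inv_into p (beta p) j)) ({0..<m} \<times> {0..<m}) (i, j) =
                restrict (\<lambda>(i, j). wc E col (inv_into q (beta q) i) (inv_into q (beta q) j)) ({0..<m} \<times> {0..<m}) (i, j)"
            using eq mq by (simp add: canon_def m_def)
          then show ?thesis using that by simp
        qed
        define g where "g x = inv_into q (beta q) (beta p x)" for x
        have bp: "bij_betw (beta p) p {0..<m}" using beta[OF pP] by (simp add: m_def)
        have bq: "bij_betw (beta q) q {0..<m}" using beta[OF qP] mq by simp
        have bg: "bij_betw g p q" unfolding g_def
          using bij_betw_trans[OF bp bij_betw_inv_into[OF bq]] by (simp add: comp_def)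
        have lt: "beta p u < m" if "u \<in> p" for u using bp that by (auto simp: bij_betw_def)
        have lI: "inv_into p (beta p) (beta p u) = u" if "u \<in> p" for u
          using bp that by (simp add: bij_betw_inv_into_left)
        have iso: "isoB E col bs p q g"
        proof -
          have "vc E col bs (g u) = vc E col bs u" if "u \<in> p" for u
            using vceq[OF lt[OF that]] lI[OF that] by (simp add: g_def)
          moreover have "wc E col (g u) (g v) = wc E col u v" if "u \<in> p" "v \<in> p" for u v
            using wceq[OF lt[OF that(1)] lt[OF that(2)]] lI[OF that(1)] lI[OF that(2)] by (simp add: g_def)
          ultimately show ?thesis using bg by (simp add: isoB_def)
        qed
        have pqd: "p \<inter> q = {}" using disj pP qP pq by blast
        have subp: "p \<subseteq> V - B" and subq: "q \<subseteq> V - B" using S.part_sub pP qP by auto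
        define \<rho> where "\<rho> x = (if x \<in> p then g x else if x \<in> q then inv_into p g x else x)" for x
        have bij: "bij_betw \<rho> V V" unfolding \<rho>_def
          by (rule bij_swap) (use bg subp subq pqd in auto)
        have fixB: "\<forall>b\<in>B. \<rho> b = b" using subp subq by (auto simp: \<rho>_def)
        have isos: "\<forall>r\<in>P. \<exists>q'\<in>P. isoB E col bs r q' \<rho>"
        proof
          fix r assume rP: "r \<in> P"
          show "\<exists>q'\<in>P. isoB E col bs r q' \<rho>"
          proof (cases "r = p")
            case True
            have "isoB E col bs p q \<rho>" by (rule isoB_cong[OF iso]) (simp add: \<rho>_def)
            then show ?thesis using True qP by blast
          next
            case rp: False
            show ?thesis
            proof (cases "r = q")
              case True
              have "isoB E col bs q p \<rho>"
                by (rule isoB_cong[OF isoB_inv[OF iso]]) (use pqd in \<open>auto simp: \<rho>_def\<close>)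
              then show ?thesis using True pP by blast
            next
              case False
              then have "r \<inter> p = {}" "r \<inter> q = {}" using disj rP pP qP rp by blast+
              then have "isoB E col bs r r \<rho>" by (intro isoB_cong[OF isoB_id]) (auto simp: \<rho>_def)
              then show ?thesis using rP by blast
            qed
          qed
        qed
        have "aut V E col \<rho>" using S.glue[OF bij fixB isos] .
        then have idv: "\<forall>v\<in>V. \<rho> v = v" using rig by (simp add: rigid_def)
        obtain x where x: "x \<in> p" using ne pP by blast
        have "g x \<in> q" using bg x by (auto simp: bij_betw_def)
        moreover have "\<rho> x = g x" using x by (simp add: \<rho>_def)
        moreover have "\<rho> x = x" using idv x subp by auto
        ultimately show False using x pqd by auto
      qed
    qed
    have cP: "card P \<le> card CS"
      using card_inj_on_le[OF canon_inj _ finCS] canonCS by blast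
    have "card V = card B + card (V - B)"
      using finV BV by (metis card_Diff_subset card_mono le_add_diff_inverse finite_subset)
    also have "card (V - B) = sum card P"
    proof -
      have "pairwise disjnt P" using disj by (auto simp: pairwise_def disjnt_def)
      moreover have "\<And>p. p \<in> P \<Longrightarrow> finite p" using UP finV by (auto intro: finite_subset)
      ultimately have "card (\<Union>P) = sum card P" by (rule card_Union_disjoint)
      then show ?thesis using UP by simp
    qed
    also have "sum card P \<le> card P * N0"
      using sum_bounded_above[of P card N0] partbound by simp
    also have "card P * N0 \<le> card CS * N0" using cP by simp
    finally show "card V \<le> k + 1 + card CS * N0" using cB by simp
  qed
qed



lemma is_graph_sub:
  assumes "is_graph (V, E)" "p \<subseteq> V"
  shows "is_graph (p, {e\<in>E. e \<subseteq> p})"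
  unfolding is_graph_def
proof (intro conjI ballI)
  show "finite (fst (p, {e\<in>E. e \<subseteq> p}))" using assms by (auto simp: is_graph_def intro: finite_subset)
next
  fix e assume "e \<in> snd (p, {e\<in>E. e \<subseteq> p})"
  then have e: "e \<in> E" "e \<subseteq> p" by auto
  then obtain u v where "u \<noteq> v" "e = {u, v}" using assms(1) by (auto simp: is_graph_def)
  then show "\<exists>u v. u \<noteq> v \<and> e = {u, v} \<and> u \<in> fst (p, {e\<in>E. e \<subseteq> p}) \<and> v \<in> fst (p, {e\<in>E. e \<subseteq> p})"
    using e by auto
qed

locale rtree =
  fixes T :: "nat set" and r :: nat and par :: "nat \<Rightarrow> nat" and n :: nat
  assumes rt: "rooted_tree_height T r par n"
begin

definition dep :: "nat \<Rightarrow> nat" where "dep t = (LEAST d. (par ^^ d) t = r)"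
definition anc :: "nat \<Rightarrow> nat" where "anc t = (par ^^ (dep t - 1)) t"

lemma rT: "r \<in> T" using rt by (simp add: rooted_tree_height_def)
lemma parT: "t \<in> T \<Longrightarrow> t \<noteq> r \<Longrightarrow> par t \<in> T" using rt by (simp add: rooted_tree_height_def)
lemma finT: "finite T" using rt by (simp add: rooted_tree_height_def)

lemma dep_ok: assumes "t \<in> T" shows "(par ^^ dep t) t = r" "dep t \<le> n"
proof -
  obtain d where d: "d \<le> n" "(par ^^ d) t = r" using rt assms by (auto simp: rooted_tree_height_def)
  show "(par ^^ dep t) t = r" unfolding dep_def using d(2) by (rule LeastI)
  have "dep t \<le> d" unfolding dep_def using d(2) by (rule Least_le)
  then show "dep t \<le> n" using d(1) by simp
qed

lemma dep_pos: "t \<in> T \<Longrightarrow> t \<noteq> r \<Longrightarrow> 1 \<le> dep t"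
  using dep_ok(1)[of t] by (cases "dep t") auto

lemma before: "j < dep t \<Longrightarrow> (par ^^ j) t \<noteq> r"
  unfolding dep_def using not_less_Least by blast

lemma inT: "t \<in> T \<Longrightarrow> j \<le> dep t \<Longrightarrow> (par ^^ j) t \<in> T"
proof (induction j)
  case 0 then show ?case by simp
next
  case (Suc j)
  then have "(par ^^ j) t \<in> T" "(par ^^ j) t \<noteq> r" using before[of j t] by auto
  then show ?case using parT by simp
qed

lemma dep_par: assumes "t \<in> T" "t \<noteq> r" "par t \<noteq> r" shows "dep (par t) = dep t - 1"
proof -
  have pt: "par t \<in> T" using parT assms by simp
  have d1: "1 \<le> dep t" using dep_pos assms by simp
  have "(par ^^ (dep t - 1)) (par t) = (par ^^ dep t) t"
    using d1 by (metis Suc_diff_le diff_Suc_1 funpow_Suc_right o_apply)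
  then have "(par ^^ (dep t - 1)) (par t) = r" using dep_ok(1)[OF assms(1)] by simp
  then have a: "dep (par t) \<le> dep t - 1" unfolding dep_def by (rule Least_le)
  have "(par ^^ Suc (dep (par t))) t = r" using dep_ok(1)[OF pt] by (simp add: funpow_swap1)
  then have "dep t \<le> Suc (dep (par t))" unfolding dep_def by (rule Least_le)
  then show ?thesis using a by simp
qed

lemma anc_par: assumes "t \<in> T" "t \<noteq> r" "par t \<noteq> r" shows "anc (par t) = anc t"
proof -
  have pt: "par t \<in> T" using parT assms by simp
  have "1 \<le> dep (par t)" using dep_pos pt assms by simp
  then have d2: "2 \<le> dep t" using dep_par[OF assms] by simp
  have "anc (par t) = (par ^^ (dep t - 2)) (par t)" unfolding anc_def using dep_par[OF assms] by (simp add: numeral_2_eq_2)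
  also have "\<dots> = (par ^^ Suc (dep t - 2)) t" by (simp add: funpow_swap1)
  also have "Suc (dep t - 2) = dep t - 1" using d2 by simp
  finally show ?thesis unfolding anc_def .
qed

lemma anc_props: assumes "t \<in> T" "t \<noteq> r" shows "anc t \<in> T" "anc t \<noteq> r" "par (anc t) = r"
proof -
  have d1: "1 \<le> dep t" using dep_pos assms by simp
  show "anc t \<in> T" unfolding anc_def using inT[OF assms(1)] by simp
  show "anc t \<noteq> r" unfolding anc_def using before d1 by simp
  have "par (anc t) = (par ^^ Suc (dep t - 1)) t" unfolding anc_def by simp
  also have "\<dots> = r" using d1 dep_ok(1)[OF assms(1)] by simp
  finally show "par (anc t) = r" .
qed

lemma anc_child: assumes "c \<in> T" "c \<noteq> r" "par c = r" shows "dep c = 1" "anc c = c"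
proof -
  have "dep c \<le> 1" unfolding dep_def using assms(3) by (intro Least_le) simp
  then show "dep c = 1" using dep_pos[OF assms(1,2)] by simp
  then show "anc c = c" by (simp add: anc_def)
qed

lemma adj_anc: assumes "s \<in> T" "t \<in> T" "s \<noteq> r" "t \<noteq> r" "tree_adj r par s t" shows "anc s = anc t"
  using assms anc_par unfolding tree_adj_def by metis

lemma conn_anc:
  assumes "S \<subseteq> T - {r}" "(s, t) \<in> {(a, b). a \<in> S \<and> b \<in> S \<and> tree_adj r par a b}\<^sup>*"
  shows "anc s = anc t"
  using assms(2)
proof (induction rule: rtrancl_induct)
  case base then show ?case by simp
next
  case (step y z)
  then have "anc y = anc z" using adj_anc assms(1) by auto
  then show ?case using step by simp
qed

end

lemma tw_dec:
  "rooted_tree_height T r par n \<Longrightarrow> tree_decomposition (V, E) T r par bag \<Longrightarrow>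
   (\<forall>t\<in>T. card (bag t) \<le> k + 1) \<Longrightarrow> is_graph (V, E) \<Longrightarrow> dec n k V E"
proof (induction n arbitrary: V E T r par bag)
  case 0
  interpret rtree T r par 0 by unfold_locales (rule "0.prems"(1))
  have "t = r" if "t \<in> T" for t using dep_ok[OF that] by simp
  then have "V \<subseteq> bag r" using "0.prems"(2) by (auto simp: tree_decomposition_def)
  moreover have "finite (bag r)" using "0.prems"(2,4) rT
    by (auto simp: tree_decomposition_def is_graph_def intro: finite_subset)
  ultimately have "card V \<le> card (bag r)" by (rule card_mono[rotated])
  then show ?case using "0.prems"(3) rT by fastforce
next
  case (Suc h)
  interpret rtree T r par "Suc h" by unfold_locales (rule Suc.prems(1))
  note td = Suc.prems(2)[unfolded tree_decomposition_def fst_conv snd_conv]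
  have bagV: "\<forall>t\<in>T. bag t \<subseteq> V" and cov: "\<forall>v\<in>V. \<exists>t\<in>T. v \<in> bag t"
    and ecov: "\<forall>e\<in>E. \<exists>t\<in>T. e \<subseteq> bag t"
    and conn: "\<forall>v\<in>V. tree_connected r par {t\<in>T. v \<in> bag t}" using td by auto
  have gr: "is_graph (V, E)" using Suc.prems(4) .
  have finV: "finite V" using gr by (simp add: is_graph_def)
  define B where "B = bag r"
  define part where "part c = {v\<in>V - B. \<exists>t\<in>T - {r}. anc t = c \<and> v \<in> bag t}" for c
  define P where "P = {part c | c. c \<in> T \<and> c \<noteq> r \<and> par c = r} - {{}}"
  have KV: "anc t = c" if h1: "v \<in> V - B" and h2: "t \<in> T" and h3: "v \<in> bag t" and h4: "v \<in> part c" for v t c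
  proof -
    obtain t' where t': "t' \<in> T - {r}" "anc t' = c" "v \<in> bag t'" using h4 by (auto simp: part_def)
    let ?S = "{t\<in>T. v \<in> bag t}"
    have S: "?S \<subseteq> T - {r}" using h1 by (auto simp: B_def)
    have "(t, t') \<in> {(a, b). a \<in> ?S \<and> b \<in> ?S \<and> tree_adj r par a b}\<^sup>*"
      using conn h1 h2 h3 t' by (auto simp: tree_connected_def)
    then have "anc t = anc t'" by (rule conn_anc[OF S])
    then show ?thesis using t' by simp
  qed
  have tnr: "t \<noteq> r" if "v \<in> V - B" "v \<in> bag t" for v t using that by (auto simp: B_def)
  have partsub: "part c \<subseteq> V - B" for c by (auto simp: part_def)
  have dec_part: "dec h k (part c) {e\<in>E. e \<subseteq> part c}" if c: "c \<in> T" "c \<noteq> r" "par c = r" for c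
  proof -
    define T' where "T' = {t\<in>T - {r}. anc t = c}"
    define bag' where "bag' t = bag t \<inter> part c" for t
    have ancc: "anc c = c" using anc_child[OF c] by simp
    have rt': "rooted_tree_height T' c par h"
      unfolding rooted_tree_height_def
    proof (intro conjI ballI)
      show "finite T'" using finT by (simp add: T'_def)
      show "c \<in> T'" using c ancc by (simp add: T'_def)
    next
      fix t assume "t \<in> T' - {c}"
      then have t: "t \<in> T" "t \<noteq> r" "anc t = c" "t \<noteq> c" by (auto simp: T'_def)
      have ptr: "par t \<noteq> r"
      proof
        assume "par t = r"
        then have "anc t = t" using anc_child t by simp
        then show False using t by simp
      qed
      show "par t \<in> T'" using parT[OF t(1,2)] ptr anc_par[OF t(1,2) ptr] t by (simp add: T'_def)
    next
      fix t assume "t \<in> T'"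
      then have t: "t \<in> T" "t \<noteq> r" "anc t = c" by (auto simp: T'_def)
      have "dep t - 1 \<le> h" using dep_ok(2)[OF t(1)] by simp
      then show "\<exists>d\<le>h. (par ^^ d) t = c" using t(3) unfolding anc_def by blast
    qed
    have td': "tree_decomposition (part c, {e\<in>E. e \<subseteq> part c}) T' c par bag'"
      unfolding tree_decomposition_def fst_conv snd_conv
    proof (intro conjI ballI)
      fix t assume "t \<in> T'" then show "bag' t \<subseteq> part c" by (simp add: bag'_def)
    next
      fix v assume "v \<in> part c"
      then obtain t where "t \<in> T - {r}" "anc t = c" "v \<in> bag t" by (auto simp: part_def)
      then show "\<exists>t\<in>T'. v \<in> bag' t" using \<open>v \<in> part c\<close> by (auto simp: T'_def bag'_def)
    next
      fix e assume e: "e \<in> {e\<in>E. e \<subseteq> part c}"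
      then obtain t where t: "t \<in> T" "e \<subseteq> bag t" using ecov by auto
      obtain u w where "e = {u, w}" using gr e by (auto simp: is_graph_def)
      then have "u \<in> e" by simp
      then have u: "u \<in> part c" "u \<in> V - B" "u \<in> bag t" using e t partsub by auto
      have "anc t = c" using KV[OF u(2) t(1) u(3) u(1)] .
      moreover have "t \<noteq> r" using tnr u by simp
      ultimately show "\<exists>t\<in>T'. e \<subseteq> bag' t" using t e by (auto simp: T'_def bag'_def)
    next
      fix v assume v: "v \<in> part c"
      then have vV: "v \<in> V - B" using partsub by auto
      let ?S = "{t\<in>T. v \<in> bag t}"
      have S: "{t\<in>T'. v \<in> bag' t} = ?S"
        using KV[OF vV _ _ v] tnr[OF vV] v by (auto simp: T'_def bag'_def)
      have Snr: "r \<notin> ?S" using vV by (auto simp: B_def)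
      have adj: "tree_adj c par a b" if ab: "a \<in> ?S" "b \<in> ?S" "tree_adj r par a b" for a b
      proof -
        have "a \<noteq> r" "b \<noteq> r" using Snr ab by auto
        then show "tree_adj c par a b" using ab(3) c(3) unfolding tree_adj_def by auto
      qed
      have "{(a, b). a \<in> ?S \<and> b \<in> ?S \<and> tree_adj r par a b} \<subseteq> {(a, b). a \<in> ?S \<and> b \<in> ?S \<and> tree_adj c par a b}"
        using adj by blast
      moreover have "tree_connected r par ?S" using conn vV by simp
      ultimately have "tree_connected c par ?S"
        unfolding tree_connected_def using rtrancl_mono by blast
      then show "tree_connected c par {t\<in>T'. v \<in> bag' t}" using S by simp
    qed
    have cb': "\<forall>t\<in>T'. card (bag' t) \<le> k + 1"
    proof
      fix t assume "t \<in> T'"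
      then have t: "t \<in> T" by (simp add: T'_def)
      have "finite (bag t)" using bagV t finV by (auto intro: finite_subset)
      then have "card (bag' t) \<le> card (bag t)" by (simp add: bag'_def card_mono)
      then show "card (bag' t) \<le> k + 1" using Suc.prems(3) t by fastforce
    qed
    have "is_graph (part c, {e\<in>E. e \<subseteq> part c})" using is_graph_sub[OF gr] partsub by blast
    then show ?thesis using Suc.IH[OF rt' td' cb'] by simp
  qed
  have "B \<subseteq> V" using bagV rT by (simp add: B_def)
  moreover have "card B \<le> k + 1" using Suc.prems(3) rT by (simp add: B_def)
  moreover have "\<Union>P = V - B"
  proof
    show "\<Union>P \<subseteq> V - B" using partsub by (auto simp: P_def)
    show "V - B \<subseteq> \<Union>P"
    proof
      fix v assume v: "v \<in> V - B"
      then obtain t where t: "t \<in> T" "v \<in> bag t" using cov by auto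
      have tr: "t \<noteq> r" using tnr v t by simp
      have vp: "v \<in> part (anc t)" using v t tr by (auto simp: part_def)
      then have "part (anc t) \<in> P" using anc_props[OF t(1) tr] by (auto simp: P_def)
      then show "v \<in> \<Union>P" using vp by blast
    qed
  qed
  moreover have "\<forall>p\<in>P. p \<noteq> {}" by (simp add: P_def)
  moreover have "\<forall>p\<in>P. \<forall>q\<in>P. p \<noteq> q \<longrightarrow> p \<inter> q = {}"
  proof (intro ballI impI)
    fix p q assume "p \<in> P" "q \<in> P" "p \<noteq> q"
    then obtain c c' where pc: "p = part c" and qc: "q = part c'" by (auto simp: P_def)
    show "p \<inter> q = {}"
    proof (rule ccontr)
      assume "p \<inter> q \<noteq> {}"
      then obtain v where v: "v \<in> part c" "v \<in> part c'" using pc qc by auto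
      then obtain t where t: "t \<in> T - {r}" "anc t = c" "v \<in> bag t" by (auto simp: part_def)
      have vV: "v \<in> V - B" using v partsub by auto
      have "anc t = c'" using KV[OF vV _ t(3) v(2)] t by simp
      then show False using t pc qc \<open>p \<noteq> q\<close> by simp
    qed
  qed
  moreover have "\<forall>e\<in>E. e \<subseteq> B \<or> (\<exists>p\<in>P. e \<subseteq> B \<union> p)"
  proof
    fix e assume e: "e \<in> E"
    then obtain t where t: "t \<in> T" "e \<subseteq> bag t" using ecov by auto
    show "e \<subseteq> B \<or> (\<exists>p\<in>P. e \<subseteq> B \<union> p)"
    proof (cases "e \<subseteq> B")
      case False
      then obtain w where w: "w \<in> e" "w \<notin> B" by auto
      have wV: "w \<in> V - B" using w t bagV by auto
      have tr: "t \<noteq> r" using tnr wV w t by auto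
      have "e \<subseteq> B \<union> part (anc t)" using t tr bagV by (auto simp: part_def)
      moreover have "w \<in> part (anc t)" using wV w t tr by (auto simp: part_def)
      then have "part (anc t) \<in> P" using anc_props[OF t(1) tr] by (auto simp: P_def)
      ultimately show ?thesis by blast
    qed simp
  qed
  moreover have "\<forall>p\<in>P. dec h k p {e\<in>E. e \<subseteq> p}" using dec_part by (auto simp: P_def)
  ultimately show ?case by (simp only: dec.simps) blast
qed



lemma bounded_finite_iso:
  assumes "\<forall>G\<in>C. is_graph G \<and> card (fst G) \<le> N"
  shows "finite_upto_iso (C :: nat graph set)"
  unfolding finite_upto_iso_def
proof (intro exI conjI ballI)
  show "finite (Pow {0..<N} \<times> Pow (Pow {0..<N}))" by simp
next
  fix G assume G: "G \<in> C"
  obtain V E where GVE: "G = (V, E)" by (cases G)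
  have gr: "is_graph (V, E)" and cV: "card V \<le> N" using assms G GVE by auto
  have finV: "finite V" and Esub: "\<forall>e\<in>E. e \<subseteq> V" using gr by (auto simp: is_graph_def)
  obtain \<beta> where b: "bij_betw \<beta> V {0..<card V}" using ex_bij_betw_finite_nat[OF finV] by blast
  have inj: "inj_on \<beta> V" using b by (rule bij_betw_imp_inj_on)
  have bV: "\<beta> ` V = {0..<card V}" using b by (rule bij_betw_imp_surj_on)
  define H where "H = ({0..<card V}, (`) \<beta> ` E)"
  have "H \<in> Pow {0..<N} \<times> Pow (Pow {0..<N})"
  proof -
    have "\<beta> ` e \<subseteq> {0..<N}" if "e \<in> E" for e
    proof -
      have "\<beta> ` e \<subseteq> \<beta> ` V" using Esub that by (intro image_mono) blast
      then show ?thesis using bV cV by auto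
    qed
    then show ?thesis using cV by (auto simp: H_def)
  qed
  moreover have "graph_iso G H"
    unfolding graph_iso_def GVE H_def fst_conv snd_conv
  proof (intro exI conjI ballI)
    show "bij_betw \<beta> V {0..<card V}" by (rule b)
  next
    fix u v assume uv: "u \<in> V" "v \<in> V"
    show "{u, v} \<in> E \<longleftrightarrow> {\<beta> u, \<beta> v} \<in> (`) \<beta> ` E"
    proof
      assume "{u, v} \<in> E" then show "{\<beta> u, \<beta> v} \<in> (`) \<beta> ` E" by (metis image_empty image_insert image_eqI)
    next
      assume "{\<beta> u, \<beta> v} \<in> (`) \<beta> ` E"
      then obtain e where e: "e \<in> E" "\<beta> ` e = \<beta> ` {u, v}" by auto
      have s1: "e \<subseteq> V" and s2: "{u, v} \<subseteq> V" using Esub e(1) uv by auto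
      have "\<beta> ` e = \<beta> ` {u, v} \<longleftrightarrow> e = {u, v}" by (rule inj_on_image_eq_iff[OF inj s1 s2])
      then have "e = {u, v}" using e(2) by blast
      then show "{u, v} \<in> E" using e by simp
    qed
  qed
  ultimately show "\<exists>H\<in>Pow {0..<N} \<times> Pow (Pow {0..<N}). graph_iso G H" by blast
qed

lemma orderable_bounded:
  fixes C :: "nat graph set"
  assumes hyp: "\<forall>G\<in>C. is_graph G \<and> depth_tw_le n k G"
    and ord: "defines_order \<phi> (inc_struct ` C)"
  shows "\<exists>N. \<forall>G\<in>C. card (fst G) \<le> N"
proof -
  define Ls where "Ls = sorted_list_of_set (free2 \<phi>)"
  have sLs: "set Ls = free2 \<phi>" using finite_free2 by (simp add: Ls_def)
  define K where "K = to_nat ` {xs :: bool list. set xs \<subseteq> UNIV \<and> length xs = length Ls}"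
  have finK: "finite K" unfolding K_def by (intro finite_imageI finite_lists_length_eq) simp
  obtain N where N: "\<forall>(V::nat set) E col. is_graph (V, E) \<and> dec n k V E \<and> (\<forall>v\<in>V. col (Inl v) \<in> K) \<and>
            (\<forall>e\<in>E. col (Inr e) \<in> K) \<and> rigid V E col \<longrightarrow> card V \<le> N"
    using rigid_bound[OF finK] by blast
  have "card (fst G) \<le> N" if GC: "G \<in> C" for G
  proof -
    obtain V E where GVE: "G = (V, E)" by (cases G)
    have gr: "is_graph (V, E)" using hyp GC GVE by auto
    have finV: "finite V" and Esub: "\<forall>e\<in>E. \<exists>u v. u \<noteq> v \<and> e = {u, v} \<and> u \<in> V \<and> v \<in> V"
      using gr by (simp_all add: is_graph_def)
    have EV: "\<forall>e\<in>E. e \<subseteq> V"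
    proof
      fix e assume "e \<in> E"
      then obtain u v where "e = {u, v}" "u \<in> V" "v \<in> V" using Esub by meson
      then show "e \<subseteq> V" by simp
    qed
    have finE: "finite E" using finV EV by (rule_tac finite_subset[of E "Pow V"]) auto
    have "dec n k V E"
    proof -
      obtain T r par bag where "rooted_tree_height T r par n" "tree_decomposition (V, E) T r par bag"
        "\<forall>t\<in>T. card (bag t) \<le> k + 1" using hyp GC GVE by (auto simp: depth_tw_le_def)
      then show ?thesis using tw_dec gr by blast
    qed
    show ?thesis
    proof (cases "V = {}")
      case True then show ?thesis using GVE by simp
    next
      case False
      define A where "A = Inl ` V \<union> Inr ` E"
      define R where "R = (\<lambda>(x::nat + nat set) (y::nat + nat set). \<exists>v e. x = Inl v \<and> y = Inr e \<and> v \<in> e)"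
      have AR: "inc_struct G = (A, R)" by (simp add: inc_struct_def GVE A_def R_def)
      have Ane: "A \<noteq> {}" using False by (simp add: A_def)
      have mem: "(A, R) \<in> inc_struct ` C" using GC AR by (metis image_eqI)
      have ball: "\<forall>(A, R)\<in>inc_struct ` C. A \<noteq> {} \<longrightarrow>
        (\<exists>P. (\<forall>i. P i \<subseteq> A) \<and> linear_order_on A {(a, b). a \<in> A \<and> b \<in> A \<and>
              sat A R (\<lambda>i. if i = 0 then a else b) P \<phi>})" using ord unfolding defines_order_def by (rule conjunct2)
      have "A \<noteq> {} \<longrightarrow> (\<exists>P. (\<forall>i. P i \<subseteq> A) \<and> linear_order_on A {(a, b). a \<in> A \<and> b \<in> A \<and>
              sat A R (\<lambda>i. if i = 0 then a else b) P \<phi>})" using bspec[OF ball mem] by simp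
      then obtain P where PA: "\<forall>i. P i \<subseteq> A" and lin: "linear_order_on A {(a, b). a \<in> A \<and> b \<in> A \<and>
              sat A R (\<lambda>i. if i = 0 then a else b) P \<phi>}"
        using Ane by blast
      define col where "col x = to_nat (map (\<lambda>j. x \<in> P j) Ls)" for x
      have colK: "col x \<in> K" for x by (simp add: col_def K_def)
      have finA: "finite A" using finV finE by (simp add: A_def)
      have "rigid V E col"
        unfolding rigid_def
      proof (intro allI impI)
        fix f assume af: "aut V E col f"
        have bf: "bij_betw f V V" using af by (simp add: aut_def)
        have injf: "inj_on f V" and fV: "f ` V = V" using bf by (auto simp: bij_betw_def)
        have vcol: "\<forall>v\<in>V. col (Inl (f v)) = col (Inl v)" using af by (simp add: aut_def)
        have wcf: "\<forall>u\<in>V. \<forall>v\<in>V. wc E col (f u) (f v) = wc E col u v" using af by (simp add: aut_def)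
        have eimg: "f ` e \<in> E \<and> col (Inr (f ` e)) = col (Inr e)" if eE: "e \<in> E" for e
        proof -
          obtain u v where uv: "e = {u, v}" "u \<in> V" "v \<in> V" using Esub eE by meson
          have "wc E col (f u) (f v) = Some (col (Inr {u, v}))" using wcf uv eE by (simp add: wc_def)
          then have "{f u, f v} \<in> E \<and> col (Inr {f u, f v}) = col (Inr {u, v})"
            by (auto simp: wc_def split: if_splits)
          then show ?thesis using uv by simp
        qed
        define \<sigma> where "\<sigma> x = (case x of Inl v \<Rightarrow> Inl (f v) | Inr e \<Rightarrow> Inr (f ` e))" for x
        have sA: "\<sigma> ` A \<subseteq> A"
        proof
          fix y assume "y \<in> \<sigma> ` A"
          then obtain x where x: "x \<in> A" "y = \<sigma> x" by blast
          show "y \<in> A"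
          proof (cases x)
            case (Inl v) then have "v \<in> V" using x by (auto simp: A_def)
            then have "f v \<in> V" using fV by blast
            then show ?thesis using x Inl by (simp add: A_def \<sigma>_def)
          next
            case (Inr e) then have "e \<in> E" using x by (auto simp: A_def)
            then show ?thesis using x Inr eimg by (simp add: A_def \<sigma>_def)
          qed
        qed
        have sinj: "inj_on \<sigma> A"
        proof (rule inj_onI)
          fix x y assume xy: "x \<in> A" "y \<in> A" "\<sigma> x = \<sigma> y"
          show "x = y"
          proof (cases x)
            case (Inl v)
            then obtain w where w: "y = Inl w" using xy(3) by (cases y) (auto simp: \<sigma>_def)
            have "v \<in> V" "w \<in> V" using xy Inl w by (auto simp: A_def)
            moreover have "f v = f w" using xy(3) Inl w by (simp add: \<sigma>_def)
            ultimately show ?thesis using injf Inl w by (simp add: inj_on_def)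
          next
            case (Inr e)
            then obtain e' where w: "y = Inr e'" using xy(3) by (cases y) (auto simp: \<sigma>_def)
            have "e \<in> E" "e' \<in> E" using xy Inr w by (auto simp: A_def)
            then have s1: "e \<subseteq> V" "e' \<subseteq> V" using EV by auto
            have "f ` e = f ` e'" using xy(3) Inr w by (simp add: \<sigma>_def)
            then have "e = e'" using inj_on_image_eq_iff[OF injf s1] by simp
            then show ?thesis using Inr w by simp
          qed
        qed
        have bs: "bij_betw \<sigma> A A" using endo_inj_surj[OF finA sA sinj] sinj by (simp add: bij_betw_def)
        have sR: "\<forall>x\<in>A. \<forall>y\<in>A. R (\<sigma> x) (\<sigma> y) = R x y"
        proof (intro ballI)
          fix x y assume x: "x \<in> A" and y: "y \<in> A"
          show "R (\<sigma> x) (\<sigma> y) = R x y"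
          proof (cases x)
            case (Inl v)
            then have v: "v \<in> V" using x by (auto simp: A_def)
            show ?thesis
            proof (cases y)
              case (Inr e)
              then have "e \<subseteq> V" using y EV by (auto simp: A_def)
              then have "f v \<in> f ` e \<longleftrightarrow> v \<in> e" using inj_on_image_mem_iff[OF injf v] by simp
              then show ?thesis using Inl Inr by (simp add: R_def \<sigma>_def)
            qed (simp add: R_def \<sigma>_def Inl)
          qed (simp add: R_def \<sigma>_def)
        qed
        have scol: "col (\<sigma> x) = col x" if "x \<in> A" for x
          using that vcol eimg by (auto simp: A_def \<sigma>_def)
        have smem: "\<sigma> x \<in> P j \<longleftrightarrow> x \<in> P j" if "x \<in> A" "j \<in> free2 \<phi>" for x j
        proof -
          have "map (\<lambda>j. \<sigma> x \<in> P j) Ls = map (\<lambda>j. x \<in> P j) Ls" using scol[OF that(1)] by (simp add: col_def)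
          then show ?thesis using that(2) sLs by (simp add: map_eq_conv)
        qed
        have sP: "\<sigma> ` P j = P j" if "j \<in> free2 \<phi>" for j
        proof (rule card_subset_eq)
          show "finite (P j)" using PA finA by (auto intro: finite_subset)
          show "\<sigma> ` P j \<subseteq> P j" using smem PA that by auto
          have "inj_on \<sigma> (P j)" using sinj PA by (auto intro: inj_on_subset)
          then show "card (\<sigma> ` P j) = card (P j)" by (rule card_image)
        qed
        let ?L = "{(a, b). a \<in> A \<and> b \<in> A \<and> sat A R (\<lambda>i. if i = 0 then a else b) P \<phi>}"
        have inv: "\<forall>a\<in>A. \<forall>b\<in>A. (\<sigma> a, \<sigma> b) \<in> ?L \<longleftrightarrow> (a, b) \<in> ?L"
        proof (intro ballI)
          fix a b assume a: "a \<in> A" and b: "b \<in> A"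
          have sa: "\<sigma> a \<in> A" "\<sigma> b \<in> A" using sA a b by auto
          have e1: "sat A R (\<sigma> \<circ> (\<lambda>i. if i = 0 then a else b)) (\<lambda>j. \<sigma> ` P j) \<phi> = sat A R (\<lambda>i. if i = 0 then a else b) P \<phi>"
            by (rule sat_aut[OF bs sR]) (use a b PA in auto)
          have e2: "\<sigma> \<circ> (\<lambda>i. if i = 0 then a else b) = (\<lambda>i. if i = 0 then \<sigma> a else \<sigma> b)" by auto
          have e3: "sat A R g (\<lambda>j. \<sigma> ` P j) \<phi> = sat A R g P \<phi>" for g
            by (rule sat_cong2) (simp add: sP)
          have "sat A R (\<lambda>i. if i = 0 then \<sigma> a else \<sigma> b) P \<phi> = sat A R (\<lambda>i. if i = 0 then a else b) P \<phi>"
            using e1[unfolded e2] e3 by simp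
          then show "(\<sigma> a, \<sigma> b) \<in> ?L \<longleftrightarrow> (a, b) \<in> ?L" using a b sa by simp
        qed
        show "\<forall>v\<in>V. f v = v"
        proof
          fix v assume v: "v \<in> V"
          then have "Inl v \<in> A" by (simp add: A_def)
          then have "\<sigma> (Inl v) = Inl v" by (rule linorder_aut_id[OF finA lin bs inv])
          then show "f v = v" by (simp add: \<sigma>_def)
        qed
      qed
      then show ?thesis using N gr \<open>dec n k V E\<close> colK GVE by auto
    qed
  qed
  then show ?thesis by blast
qed



fun conjs :: "mso list \<Rightarrow> mso" where
  "conjs [] = Eq 0 0"
| "conjs (x # xs) = Conj x (conjs xs)"

lemma sat_conjs: "sat A R f F (conjs xs) \<longleftrightarrow> (\<forall>x\<in>set xs. sat A R f F x)"
  by (induction xs) auto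

lemma free1_conjs: "(\<forall>x\<in>set xs. free1 x \<subseteq> {0, 1}) \<Longrightarrow> free1 (conjs xs) \<subseteq> {0, 1}"
  by (induction xs) auto

lemma take_mem_iff:
  assumes "distinct xs" "i < length xs"
  shows "xs ! i \<in> set (take n xs) \<longleftrightarrow> i < n"
proof
  assume "xs ! i \<in> set (take n xs)"
  then obtain j where j: "j < length (take n xs)" "take n xs ! j = xs ! i" by (auto simp: in_set_conv_nth)
  then have "xs ! j = xs ! i" "j < length xs" "j < n" by auto
  then have "j = i" using nth_eq_iff_index_eq[OF assms(1)] assms(2) by blast
  then show "i < n" using j by simp
next
  assume "i < n"
  then show "xs ! i \<in> set (take n xs)" using assms(2) by (auto simp: in_set_conv_nth intro!: exI[of _ i])
qed

lemma is_graph_pow: assumes "is_graph (V, E)" shows "finite V" "E \<subseteq> Pow V"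
proof -
  show "finite V" using assms by (simp add: is_graph_def)
  show "E \<subseteq> Pow V"
  proof
    fix e assume e: "e \<in> E"
    have "\<forall>e\<in>E. \<exists>u v. u \<noteq> v \<and> e = {u, v} \<and> u \<in> V \<and> v \<in> V" using assms by (simp add: is_graph_def)
    then obtain u v where "e = {u, v}" "u \<in> V" "v \<in> V" using e by meson
    then show "e \<in> Pow V" by simp
  qed
qed

lemma finite_orderable:
  fixes C :: "'v graph set"
  assumes gr: "\<forall>G\<in>C. is_graph G" and fin: "finite_upto_iso C"
  shows "MSO2_orderable C"
proof -
  obtain F :: "'v graph set" where F: "finite F" "\<forall>G\<in>C. \<exists>H\<in>F. graph_iso G H"
    using fin by (auto simp: finite_upto_iso_def)
  define M where "M = (\<Sum>H\<in>F. card (fst H) + 2 ^ card (fst H))"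
  define \<phi> where "\<phi> = conjs (map (\<lambda>j. Neg (Conj (Mem 1 j) (Neg (Mem 0 j)))) [0..<M])"
  have satphi: "sat A R f P \<phi> \<longleftrightarrow> (\<forall>j<M. f 1 \<in> P j \<longrightarrow> f 0 \<in> P j)" for A R f P
    by (auto simp: \<phi>_def sat_conjs)
  have free: "free1 \<phi> \<subseteq> {0, 1}" unfolding \<phi>_def by (rule free1_conjs) auto
  have bound: "card (fst (inc_struct G)) \<le> M" if GC: "G \<in> C" for G
  proof -
    obtain V E where GVE: "G = (V, E)" by (cases G)
    have "is_graph (V, E)" using gr GC GVE by simp
    then have finV: "finite V" and EV: "E \<subseteq> Pow V" by (rule is_graph_pow)+
    obtain H where H: "H \<in> F" "graph_iso G H" using F GC by blast
    have "card V = card (fst H)" using H(2) GVE by (auto simp: graph_iso_def bij_betw_same_card)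
    have "card E \<le> 2 ^ card V" using card_mono[OF _ EV] finV by (simp add: card_Pow)
    have "card (fst (inc_struct G)) \<le> card (Inl ` V :: ('v + 'v set) set) + card (Inr ` E :: ('v + 'v set) set)"
      unfolding inc_struct_def GVE fst_conv snd_conv by (rule card_Un_le)
    also have "\<dots> \<le> card V + card E" by (intro add_mono card_image_le) (use finV EV in \<open>auto intro: finite_subset\<close>)
    also have "\<dots> \<le> card (fst H) + 2 ^ card (fst H)" using \<open>card E \<le> 2 ^ card V\<close> \<open>card V = card (fst H)\<close> by simp
    also have "\<dots> \<le> M" unfolding M_def by (rule member_le_sum) (use H F in auto)
    finally show ?thesis .
  qed
  have "defines_order \<phi> (inc_struct ` C)"
    unfolding defines_order_def
  proof (intro conjI free ballI impI)
    fix AR assume "AR \<in> inc_struct ` C"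
    then obtain G where GC: "G \<in> C" and AR: "AR = inc_struct G" by blast
    obtain A R where ARp: "AR = (A, R)" by (cases AR)
    obtain V E where GVE: "G = (V, E)" by (cases G)
    have "is_graph (V, E)" using gr GC GVE by simp
    then have finV: "finite V" and EV: "E \<subseteq> Pow V" by (rule is_graph_pow)+
    have finE: "finite E" using finV EV by (rule_tac finite_subset[OF EV]) simp
    have Adef: "A = fst (inc_struct G)" using AR ARp by (metis fst_conv)
    have finA: "finite A" using finV finE by (simp add: Adef inc_struct_def GVE)
    have cA: "card A \<le> M" using bound[OF GC] Adef by simp
    obtain as where as: "set as = A" "distinct as" using finite_distinct_list[OF finA] by blast
    have las: "length as \<le> M" using cA as distinct_card by fastforce
    define P where "P j = set (take (Suc j) as)" for j
    have bn: "bij_betw (nth as) {..<length as} A" using bij_betw_nth[OF as(2) refl as(1)[symmetric]] .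
    define ix where "ix = inv_into {..<length as} (nth as)"
    have ixl: "ix a < length as" and asix: "as ! ix a = a" if "a \<in> A" for a
      using bij_betw_inv_into[OF bn] that bn by (auto simp: ix_def bij_betw_def f_inv_into_f)
    have key: "(\<forall>j<M. b \<in> P j \<longrightarrow> a \<in> P j) \<longleftrightarrow> ix a \<le> ix b" if "a \<in> A" "b \<in> A" for a b
    proof -
      have pa: "a \<in> P j \<longleftrightarrow> ix a < Suc j" for j
        using take_mem_iff[OF as(2) ixl[OF that(1)]] asix[OF that(1)] by (simp add: P_def)
      have pb: "b \<in> P j \<longleftrightarrow> ix b < Suc j" for j
        using take_mem_iff[OF as(2) ixl[OF that(2)]] asix[OF that(2)] by (simp add: P_def)
      have "ix b < M" using ixl[OF that(2)] las by simp
      then show ?thesis unfolding pa pb by auto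
    qed
    have PA: "\<forall>i. P i \<subseteq> A" using as by (auto simp: P_def dest: in_set_takeD)
    let ?L = "{(a, b). a \<in> A \<and> b \<in> A \<and> sat A R (\<lambda>i. if i = 0 then a else b) P \<phi>}"
    have L: "?L = {(a, b). a \<in> A \<and> b \<in> A \<and> ix a \<le> ix b}"
      using key by (auto simp: satphi)
    have "linear_order_on A ?L"
      unfolding L linear_order_on_def partial_order_on_def preorder_on_def
    proof (intro conjI)
      show "refl_on A {(a, b). a \<in> A \<and> b \<in> A \<and> ix a \<le> ix b}" by (auto simp: refl_on_def)
      show "trans {(a, b). a \<in> A \<and> b \<in> A \<and> ix a \<le> ix b}" by (auto simp: trans_def)
      show "antisym {(a, b). a \<in> A \<and> b \<in> A \<and> ix a \<le> ix b}"
        unfolding antisym_def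
      proof clarify
        fix a b assume "a \<in> A" "b \<in> A" "ix a \<le> ix b" "ix b \<le> ix a"
        then show "a = b" using asix by (metis le_antisym)
      qed
      show "total_on A {(a, b). a \<in> A \<and> b \<in> A \<and> ix a \<le> ix b}" by (auto simp: total_on_def)
    qed auto
    then show "case AR of (A, R) \<Rightarrow> A \<noteq> {} \<longrightarrow> (\<exists>P. (\<forall>i. P i \<subseteq> A) \<and>
        linear_order_on A {(a, b). a \<in> A \<and> b \<in> A \<and> sat A R (\<lambda>i. if i = 0 then a else b) P \<phi>})"
      using PA ARp by auto
  qed
  then show ?thesis unfolding MSO2_orderable_def by blast
qed

definition Gm :: "nat \<Rightarrow> nat graph" where "Gm m = ({0..<m}, {})"

lemma Gm_in: assumes "1 \<le> n" shows "is_graph (Gm m) \<and> depth_tw_le n k (Gm m)"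
proof
  show "is_graph (Gm m)" by (simp add: Gm_def is_graph_def)
  define bag where "bag t = (if t = 0 then {} else {t - 1 :: nat})" for t :: nat
  have rt: "rooted_tree_height {0..m} 0 (\<lambda>_. 0) n"
    unfolding rooted_tree_height_def
  proof (intro conjI ballI)
    fix t :: nat assume "t \<in> {0..m}"
    show "\<exists>d\<le>n. ((\<lambda>_. 0::nat) ^^ d) t = 0"
    proof (cases "t = 0")
      case True
      have "((\<lambda>_. 0::nat) ^^ 0) t = 0" using True by simp
      then show ?thesis by (intro exI[of _ 0] conjI le0)
    next
      case False
      have "((\<lambda>_. 0::nat) ^^ 1) t = 0" by simp
      then show ?thesis by (intro exI[of _ 1] conjI assms)
    qed
  qed auto
  have td: "tree_decomposition (Gm m) {0..m} 0 (\<lambda>_. 0) bag"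
    unfolding tree_decomposition_def Gm_def fst_conv snd_conv
  proof (intro conjI ballI)
    fix t assume "t \<in> {0..m}" then show "bag t \<subseteq> {0..<m}" by (auto simp: bag_def)
  next
    fix v assume "v \<in> {0..<m}"
    then show "\<exists>t\<in>{0..m}. v \<in> bag t" by (intro bexI[of _ "Suc v"]) (auto simp: bag_def)
  next
    fix v assume "v \<in> {0..<m}"
    have "{t \<in> {0..m}. v \<in> bag t} = {Suc v}" using \<open>v \<in> {0..<m}\<close> by (auto simp: bag_def)
    then show "tree_connected 0 (\<lambda>_. 0) {t \<in> {0..m}. v \<in> bag t}" by (simp add: tree_connected_def)
  qed auto
  have "\<forall>t\<in>{0..m}. card (bag t) \<le> k + 1" by (simp add: bag_def)
  then show "depth_tw_le n k (Gm m)" using rt td unfolding depth_tw_le_def by blast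
qed

lemma Gm_infinite: assumes "range Gm \<subseteq> C" shows "\<not> finite_upto_iso C"
proof
  assume "finite_upto_iso C"
  then obtain F :: "nat graph set" where F: "finite F" "\<forall>G\<in>C. \<exists>H\<in>F. graph_iso G H"
    by (auto simp: finite_upto_iso_def)
  have "m \<in> (\<lambda>H. card (fst H)) ` F" for m
  proof -
    obtain H where "H \<in> F" "graph_iso (Gm m) H" using F assms by blast
    then have "card (fst H) = m" by (auto simp: graph_iso_def Gm_def dest: bij_betw_same_card)
    then show ?thesis using \<open>H \<in> F\<close> by blast
  qed
  then have "UNIV \<subseteq> (\<lambda>H. card (fst H)) ` F" by blast
  then have "finite (UNIV :: nat set)" using F(1) by (meson finite_imageI finite_subset)
  then show False by simp
qed

theorem proposition4p15:
  fixes n k :: nat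
  shows "(\<forall>C :: nat graph set. (\<forall>G\<in>C. is_graph G \<and> depth_tw_le n k G) \<longrightarrow>
            (MSO2_orderable C \<longleftrightarrow> finite_upto_iso C))
       \<and> (1 \<le> n \<longrightarrow>
            hereditarily_MSO2_unorderable {G :: nat graph. is_graph G \<and> depth_tw_le n k G})"
proof -
  have P1: "\<forall>C :: nat graph set. (\<forall>G\<in>C. is_graph G \<and> depth_tw_le n k G) \<longrightarrow>
            (MSO2_orderable C \<longleftrightarrow> finite_upto_iso C)"
  proof (intro allI impI iffI)
    fix C :: "nat graph set" assume h: "\<forall>G\<in>C. is_graph G \<and> depth_tw_le n k G"
    {
      assume "MSO2_orderable C"
      then obtain \<phi> where "defines_order \<phi> (inc_struct ` C)" by (auto simp: MSO2_orderable_def)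
      then obtain N where "\<forall>G\<in>C. card (fst G) \<le> N" using orderable_bounded[OF h] by blast
      then show "finite_upto_iso C" using h by (intro bounded_finite_iso) blast
    }
    {
      assume "finite_upto_iso C"
      then show "MSO2_orderable C" using h by (intro finite_orderable) auto
    }
  qed
  moreover have "1 \<le> n \<longrightarrow> hereditarily_MSO2_unorderable {G :: nat graph. is_graph G \<and> depth_tw_le n k G}"
  proof
    assume n: "1 \<le> n"
    have "range Gm \<subseteq> {G :: nat graph. is_graph G \<and> depth_tw_le n k G}" using Gm_in[OF n] by auto
    then have "\<not> finite_upto_iso {G :: nat graph. is_graph G \<and> depth_tw_le n k G}" by (rule Gm_infinite)
    moreover have "\<forall>C'\<subseteq>{G :: nat graph. is_graph G \<and> depth_tw_le n k G}. \<not> finite_upto_iso C' \<longrightarrow> \<not> MSO2_orderable C'"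
      using P1 by blast
    ultimately show "hereditarily_MSO2_unorderable {G :: nat graph. is_graph G \<and> depth_tw_le n k G}"
      by (simp add: hereditarily_MSO2_unorderable_def)
  qed
  ultimately show ?thesis by blast
qed


end
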